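(* Assume $q>2$. For every integer $d\ge1$, $$\deg_\theta\big(\operatorname{BG}_{q^d-2}\big)=(d-1)q^d-\frac{2q(q^{d-1}-1)}{q-1}.$$
   Context: $A=\mathbb{F}_q[\theta]$, $A^+(k)$ the monic polynomials of degree $k$; $\operatorname{BG}_n=\sum_{k\ge0}\sum_{a\in A^+(k)}a^{n}\in A$ (a finite sum since the inner sums vanish for large $k$). *)

theory Defs
  imports "HOL-Computational_Algebra.Polynomial" "HOL-Library.Groups_Big_Fun" "HOL-Library.Cardinality"
begin

definition monic_deg :: "nat \<Rightarrow> ('a::{field,finite}) poly set" where
  "monic_deg k = {a. lead_coeff a = 1 \<and> degree a = k}"

definition S_pow :: "nat \<Rightarrow> nat \<Rightarrow> ('a::{field,finite}) poly" where
  "S_pow k n = (\<Sum>a\<in>monic_deg k. a ^ n)"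

definition BG :: "nat \<Rightarrow> ('a::{field,finite}) poly" where
  "BG n = Sum_any (\<lambda>k. S_pow k n)"

end

theory Submission
  imports Defs
begin


definition wsum :: "nat \<Rightarrow> (nat \<Rightarrow> nat) \<Rightarrow> nat set \<Rightarrow> nat" where
  "wsum q r X = (\<Sum>t\<in>X. q ^ r t)"

definition special :: "nat \<Rightarrow> nat \<Rightarrow> nat \<Rightarrow> nat set \<Rightarrow> (nat \<Rightarrow> nat) \<Rightarrow> bool" where
  "special q K s J r \<longleftrightarrow> finite J \<and> (\<forall>t\<in>J. s \<le> r t \<and> r t \<le> s + K) \<and>
     card {t\<in>J. r t = s} = q - 2 \<and> (\<forall>v. s < v \<longrightarrow> v \<le> s + K \<longrightarrow> card {t\<in>J. r t = v} = q - 1)"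

definition Wh :: "nat \<Rightarrow> nat \<Rightarrow> nat \<Rightarrow> nat" where "Wh q h b = q ^ Suc b - 2 * q ^ h"

fun Tt :: "nat \<Rightarrow> nat \<Rightarrow> nat \<Rightarrow> nat" where
  "Tt q 0 s = 0"
| "Tt q (Suc k) s = Wh q (s+1) (s + Suc k) + Tt q k (s+1)"

definition Top :: "nat \<Rightarrow> (nat \<Rightarrow> nat) \<Rightarrow> nat set \<Rightarrow> nat \<Rightarrow> nat" where
  "Top q r J m = Max (wsum q r ` {X. X \<subseteq> J \<and> card X \<le> m})"

definition Ub :: "nat \<Rightarrow> nat \<Rightarrow> nat set \<Rightarrow> (nat \<Rightarrow> nat) \<Rightarrow> nat" where
  "Ub q k J r = (\<Sum>i<k. Top q r J ((k - i) * (q - 1) - 1))"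

lemma geo: "1 \<le> (q::nat) \<Longrightarrow> h \<le> Suc b \<Longrightarrow> (\<Sum>v\<in>{h..b}. (q-1)*q^v) + q^h = q^Suc b"
proof (induction b)
  case 0
  then have "h = 0 \<or> h = 1" by auto
  then show ?case
  proof
    assume "h = 0" then show ?thesis using 0 by simp
  next
    assume "h = 1" then show ?thesis by simp
  qed
next
  case (Suc b)
  show ?case
  proof (cases "h = Suc (Suc b)")
    case True then show ?thesis by simp
  next
    case False
    then have "h \<le> Suc b" using Suc.prems by simp
    then have "{h..Suc b} = insert (Suc b) {h..b}" by auto
    then have "(\<Sum>v\<in>{h..Suc b}. (q-1)*q^v) = (q-1)*q^Suc b + (\<Sum>v\<in>{h..b}. (q-1)*q^v)"
      by simp
    moreover have "(q-1)*x + x = q*x" for x using Suc.prems(1) by (cases q) auto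
    ultimately show ?thesis using Suc.IH[OF Suc.prems(1) \<open>h \<le> Suc b\<close>]
      by (metis (no_types, lifting) add.assoc power_Suc)
  qed
qed

lemma fib_sum:
  assumes "finite J" "finite V" "\<forall>t\<in>J. r t \<in> V"
  shows "(\<Sum>t\<in>J. f (r t)) = (\<Sum>v\<in>V. card {t\<in>J. r t = v} * f v)"
proof -
  have "(\<Sum>t\<in>J. f (r t)) = (\<Sum>v\<in>V. \<Sum>t\<in>{t\<in>J. r t = v}. f (r t))"
    by (rule sum.group[symmetric]) (use assms in auto)
  also have "\<dots> = (\<Sum>v\<in>V. card {t\<in>J. r t = v} * f v)"
    by (intro sum.cong refl) simp
  finally show ?thesis .
qed

lemma special_hi:
  assumes sp: "special q K s J r" and q: "q \<ge> 3" and h: "s + 1 \<le> h" "h \<le> Suc (s + K)"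
  shows "card {t\<in>J. h \<le> r t} = (Suc (s+K) - h) * (q - 1)"
    and "wsum q r {t\<in>J. h \<le> r t} + q ^ h = q ^ Suc (s + K)"
proof -
  let ?J = "{t\<in>J. h \<le> r t}"
  have fin: "finite ?J" using sp by (simp add: special_def)
  have vals: "\<forall>t\<in>?J. r t \<in> {h..s+K}" using sp by (auto simp: special_def)
  have fibs: "\<And>v. v \<in> {h..s+K} \<Longrightarrow> card {t\<in>?J. r t = v} = q - 1"
  proof -
    fix v assume v: "v \<in> {h..s+K}"
    have "{t\<in>?J. r t = v} = {t\<in>J. r t = v}" using v by auto
    then show "card {t\<in>?J. r t = v} = q - 1" using sp v h by (auto simp: special_def)
  qed
  have "card ?J = (\<Sum>t\<in>?J. (\<lambda>_. 1::nat) (r t))" by simp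
  also have "\<dots> = (\<Sum>v\<in>{h..s+K}. card {t\<in>?J. r t = v} * 1)"
    by (rule fib_sum[OF fin _ vals]) simp
  also have "\<dots> = (\<Sum>v\<in>{h..s+K}. q - 1)" using fibs by simp
  finally show "card ?J = (Suc (s+K) - h) * (q - 1)" by simp
  have "wsum q r ?J = (\<Sum>v\<in>{h..s+K}. card {t\<in>?J. r t = v} * q ^ v)"
    unfolding wsum_def by (rule fib_sum[OF fin _ vals]) simp
  also have "\<dots> = (\<Sum>v\<in>{h..s+K}. (q - 1) * q ^ v)" using fibs by simp
  finally show "wsum q r ?J + q ^ h = q ^ Suc (s + K)" using geo[of q h "s+K"] q h by simp
qed

lemma wsum_union: "finite A \<Longrightarrow> finite B \<Longrightarrow> A \<inter> B = {} \<Longrightarrow> wsum q r (A \<union> B) = wsum q r A + wsum q r B"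
  unfolding wsum_def by (rule sum.union_disjoint)

lemma core:
  assumes sp: "special q K s J r" and q: "q \<ge> 3" and h: "s + 1 \<le> h" "h \<le> s + K"
    and X: "X \<subseteq> J" "card X \<le> (Suc (s+K) - h) * (q - 1) - 1"
  defines "Xlo \<equiv> {t\<in>X. r t < h}" and "Z \<equiv> {t\<in>J. h \<le> r t} - X"
  shows "wsum q r X + wsum q r Z = wsum q r Xlo + q^h + Wh q h (s+K)"
    and "card Xlo + 1 \<le> card Z"
    and "wsum q r Xlo \<le> card Xlo * q^(h-1)"
    and "card Z * q^h \<le> wsum q r Z"
proof -
  let ?Jhi = "{t\<in>J. h \<le> r t}"
  let ?Xhi = "X \<inter> ?Jhi"
  have finJ: "finite J" using sp by (simp add: special_def)
  then have finX: "finite X" using X finite_subset by blast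
  have finZ: "finite Z" unfolding Z_def using finJ by simp
  have finlo: "finite Xlo" unfolding Xlo_def using finX by simp
  have hi1: "wsum q r ?Jhi + q ^ h = q ^ Suc (s + K)" and hi2: "card ?Jhi = (Suc (s+K) - h) * (q - 1)"
    using special_hi[OF sp q h(1)] h by auto
  have "q ^ Suc h \<le> q ^ Suc (s+K)" using q h by (intro power_increasing) auto
  moreover have "2 * q^h \<le> q ^ Suc h" using q by simp
  ultimately have W: "wsum q r ?Jhi = q^h + Wh q h (s+K)" using hi1 unfolding Wh_def by linarith
  have e1: "X = Xlo \<union> ?Xhi" "Xlo \<inter> ?Xhi = {}" using X unfolding Xlo_def by auto
  have e2: "?Jhi = ?Xhi \<union> Z" "?Xhi \<inter> Z = {}" unfolding Z_def by auto
  have finhi: "finite ?Xhi" using finX by simp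
  have wX: "wsum q r X = wsum q r Xlo + wsum q r ?Xhi"
    using wsum_union[OF finlo finhi e1(2)] e1(1) by simp
  have wJ: "wsum q r ?Jhi = wsum q r ?Xhi + wsum q r Z"
    using wsum_union[OF finhi finZ e2(2)] e2(1) by simp
  show "wsum q r X + wsum q r Z = wsum q r Xlo + q^h + Wh q h (s+K)"
    using wX wJ W by simp
  have cX: "card X = card Xlo + card ?Xhi" using card_Un_disjoint[OF finlo finhi e1(2)] e1(1) by simp
  have cJ: "card ?Jhi = card ?Xhi + card Z" using card_Un_disjoint[OF finhi finZ e2(2)] e2(1) by simp
  have a: "1 \<le> Suc (s+K) - h" using h by arith
  have b: "1 \<le> q - 1" using q by arith
  have "1 \<le> (Suc (s+K) - h) * (q - 1)" using mult_le_mono[OF a b] by simp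
  then show "card Xlo + 1 \<le> card Z" using cX cJ hi2 X(2) by linarith
  have "\<And>t. t\<in>Xlo \<Longrightarrow> q ^ r t \<le> q^(h-1)" using q h
    by (auto simp: Xlo_def intro!: power_increasing)
  then show "wsum q r Xlo \<le> card Xlo * q^(h-1)"
    unfolding wsum_def using sum_bounded_above[of Xlo "\<lambda>t. q ^ r t" "q^(h-1)"] by simp
  show "card Z * q^h \<le> wsum q r Z"
    unfolding wsum_def using sum_bounded_below[of Z "q^h" "\<lambda>t. q ^ r t"] q
    by (simp add: Z_def power_increasing)
qed

lemma KL:
  assumes sp: "special q K s J r" and q: "q \<ge> 3" and h: "s + 1 \<le> h" "h \<le> s + K"
    and X: "X \<subseteq> J" "card X \<le> (Suc (s+K) - h) * (q - 1) - 1"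
  shows "wsum q r X \<le> Wh q h (s+K)"
proof -
  let ?lo = "{t\<in>X. r t < h}" and ?Z = "{t\<in>J. h \<le> r t} - X"
  note c = core[OF sp q h X]
  have "card ?lo * q^(h-1) \<le> card ?lo * q^h" using q by (intro mult_le_mono2 power_increasing) auto
  moreover have "card ?lo * q^h + q^h \<le> card ?Z * q^h" using c(2)
    by (metis add_mult_distrib mult_1 mult_le_mono1)
  ultimately show ?thesis using c(1,3,4) by linarith
qed

lemma KS:
  assumes sp: "special q K s J r" and q: "q \<ge> 3" and K: "1 \<le> K"
    and X: "X \<subseteq> J" "card X \<le> K * (q - 1) - 1"
    and eq: "Wh q (s+1) (s+K) \<le> wsum q r X"
  shows "\<exists>z\<in>J. r z = s + 1 \<and> X = {t\<in>J. s + 1 \<le> r t} - {z}"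
proof -
  let ?h = "s+1"
  let ?lo = "{t\<in>X. r t < ?h}" and ?Z = "{t\<in>J. ?h \<le> r t} - X"
  have X': "card X \<le> (Suc (s+K) - ?h) * (q - 1) - 1" using X(2) by simp
  note c = core[OF sp q _ _ X(1) X', simplified]
  have c1: "wsum q r X + wsum q r ?Z = wsum q r ?lo + q * q ^ s + Wh q (Suc s) (s + K)"
    and c2: "card ?lo + 1 \<le> card ?Z" and c3: "wsum q r ?lo \<le> card ?lo * q ^ s"
    and c4: "card ?Z * (q * q ^ s) \<le> wsum q r ?Z" using c K by auto
  have Z1: "card ?Z * (q * q ^ s) \<le> card ?lo * q ^ s + q * q ^ s" using c1 c3 c4 eq by simp
  have lo0: "card ?lo = 0"
  proof (rule ccontr)
    assume "card ?lo \<noteq> 0"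
    then have "card ?lo * q ^ s < card ?lo * (q * q ^ s)" using q by simp
    moreover have "(card ?lo + 1) * (q * q ^ s) \<le> card ?Z * (q * q ^ s)" using c2 by (rule mult_le_mono1)
    moreover have "(card ?lo + 1) * (q * q ^ s) = card ?lo * (q * q ^ s) + q * q ^ s"
      by (simp add: algebra_simps)
    ultimately show False using Z1 by linarith
  qed
  have finJ: "finite J" using sp by (simp add: special_def)
  have "card ?Z * (q * q ^ s) \<le> 1 * (q * q ^ s)" using Z1 lo0 by simp
  then have "card ?Z \<le> 1" using q by (subst (asm) mult_le_cancel2) simp
  with c2 lo0 have "card ?Z = 1" by linarith
  then obtain z where z: "?Z = {z}" by (rule card_1_singletonE)
  have "wsum q r ?Z \<le> q * q ^ s" using c1 c3 lo0 eq by simp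
  then have "q ^ r z \<le> q ^ Suc s" using z by (simp add: wsum_def)
  then have "r z \<le> Suc s" using q power_le_imp_le_exp[of q "r z" "Suc s"] by (simp del: power_Suc)
  moreover have "z \<in> J" "Suc s \<le> r z" using z by auto
  ultimately have rz: "r z = s + 1" by simp
  have "?lo = {}" using lo0 finJ X(1) by (simp add: finite_subset)
  then have "X \<subseteq> {t\<in>J. s + 1 \<le> r t}" using X(1) by auto
  then have "X = {t\<in>J. s + 1 \<le> r t} - {z}" using z by auto
  then show ?thesis using rz \<open>z \<in> J\<close> by blast
qed

lemma hiW:
  assumes sp: "special q K s J r" and q: "q \<ge> 3" and h: "s + 1 \<le> h" "h \<le> s + K"
  shows "wsum q r {t\<in>J. h \<le> r t} = q^h + Wh q h (s+K)"
proof -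
  have hi1: "wsum q r {t\<in>J. h \<le> r t} + q ^ h = q ^ Suc (s + K)"
    using special_hi[OF sp q h(1)] h by auto
  have "q ^ Suc h \<le> q ^ Suc (s+K)" using q h by (intro power_increasing) auto
  moreover have "2 * q^h \<le> q ^ Suc h" using q by simp
  ultimately show ?thesis using hi1 unfolding Wh_def by linarith
qed

lemma card_special:
  assumes sp: "special q K s J r" and q: "q \<ge> 3"
  shows "card J = Suc K * (q - 1) - 1"
proof -
  have finJ: "finite J" using sp by (simp add: special_def)
  have e: "J = {t\<in>J. r t = s} \<union> {t\<in>J. s + 1 \<le> r t}" using sp by (auto simp: special_def)
  have "card J = card {t\<in>J. r t = s} + card {t\<in>J. s + 1 \<le> r t}"
    using finJ by (subst e, subst card_Un_disjoint) auto
  also have "\<dots> = (q - 2) + K * (q - 1)"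
    using sp special_hi(1)[OF sp q, of "s+1"] by (simp add: special_def)
  finally show ?thesis using q by (simp add: algebra_simps)
qed

lemma special_step:
  assumes sp: "special q (Suc k) s J r" and q: "q \<ge> 3" and z: "z \<in> J" "r z = s + 1"
  defines "S \<equiv> insert z {t\<in>J. r t = s}"
  shows "special q k (s+1) (J - S) r" "card S = q - 1" "S \<subseteq> J"
    "wsum q r (J - S) = Wh q (s+1) (s + Suc k)"
proof -
  have finJ: "finite J" using sp by (simp add: special_def)
  have eq: "J - S = {t\<in>J. s+1 \<le> r t} - {z}" unfolding S_def using sp z by (auto simp: special_def)
  show "S \<subseteq> J" unfolding S_def using z by auto
  have "z \<notin> {t\<in>J. r t = s}" using z by auto
  then show "card S = q - 1" unfolding S_def using finJ sp q by (simp add: special_def)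
  have w: "wsum q r {t\<in>J. s+1 \<le> r t} = q^(s+1) + Wh q (s+1) (s + Suc k)"
    using hiW[OF sp q] by simp
  have "wsum q r ({t\<in>J. s+1 \<le> r t} - {z}) + q ^ r z = wsum q r {t\<in>J. s+1 \<le> r t}"
    unfolding wsum_def using sum.remove[of "{t\<in>J. s+1 \<le> r t}" z "\<lambda>t. q ^ r t"] finJ z by simp
  then show "wsum q r (J - S) = Wh q (s+1) (s + Suc k)" using w z eq by simp
  have vals: "\<forall>t\<in>J. s \<le> r t \<and> r t \<le> s + Suc k" and
    f0: "card {t\<in>J. r t = s} = q - 2" and
    fv: "\<forall>v. s < v \<longrightarrow> v \<le> s + Suc k \<longrightarrow> card {t\<in>J. r t = v} = q - 1"
    using sp by (simp_all add: special_def)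
  show "special q k (s+1) (J - S) r"
    unfolding special_def
  proof (intro conjI allI impI ballI)
    show "finite (J - S)" using finJ by simp
  next
    fix t assume "t \<in> J - S" then show "s + 1 \<le> r t" using eq by blast
  next
    fix t assume "t \<in> J - S" then show "r t \<le> s + 1 + k" using vals by auto
  next
    have e2: "{t \<in> J - S. r t = s + 1} = {t\<in>J. r t = s+1} - {z}" unfolding eq by auto
    have "card {t\<in>J. r t = s+1} = q - 1" using fv by simp
    then show "card {t \<in> J - S. r t = s + 1} = q - 2" unfolding e2 using z finJ by simp
  next
    fix v assume v: "s + 1 < v" "v \<le> s + 1 + k"
    have "{t \<in> J - S. r t = v} = {t\<in>J. r t = v}" unfolding eq using v z by auto
    then show "card {t \<in> J - S. r t = v} = q - 1" using fv v by simp
  qed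
qed

lemma Tt_sum: "(\<Sum>i<k. Wh q (s+i+1) (s+k)) = Tt q k s"
proof (induction k arbitrary: s)
  case 0 then show ?case by simp
next
  case (Suc k)
  have "(\<Sum>i<Suc k. Wh q (s+i+1) (s+Suc k)) = Wh q (s+1) (s+Suc k) + (\<Sum>i<k. Wh q (s+Suc i+1) (s+Suc k))"
    by (subst sum.lessThan_Suc_shift) simp
  also have "(\<Sum>i<k. Wh q (s+Suc i+1) (s+Suc k)) = (\<Sum>i<k. Wh q ((s+1)+i+1) ((s+1)+k))" by simp
  also have "\<dots> = Tt q k (s+1)" by (rule Suc.IH)
  finally show ?case by simp
qed

lemma Top_ge: "finite J \<Longrightarrow> X \<subseteq> J \<Longrightarrow> card X \<le> m \<Longrightarrow> wsum q r X \<le> Top q r J m"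
  unfolding Top_def by (rule Max_ge) auto

lemma Top_le: "finite J \<Longrightarrow> (\<And>X. X \<subseteq> J \<Longrightarrow> card X \<le> m \<Longrightarrow> wsum q r X \<le> B) \<Longrightarrow> Top q r J m \<le> B"
  unfolding Top_def by (subst Max_le_iff) auto

lemma Top_mono: "finite J \<Longrightarrow> J' \<subseteq> J \<Longrightarrow> Top q r J' m \<le> Top q r J m"
  by (rule Top_le) (auto simp: finite_subset intro: Top_ge)

lemma Ub_step:
  assumes "finite J" "S \<subseteq> J" "card (J - S) \<le> Suc k * (q - 1) - 1"
  shows "wsum q r (J - S) + Ub q k (J - S) r \<le> Ub q (Suc k) J r"
proof -
  have "Ub q (Suc k) J r = Top q r J (Suc k * (q - 1) - 1) + (\<Sum>i<k. Top q r J ((k - i) * (q - 1) - 1))"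
    unfolding Ub_def by (subst sum.lessThan_Suc_shift) simp
  moreover have "wsum q r (J - S) \<le> Top q r J (Suc k * (q - 1) - 1)"
    using assms by (intro Top_ge) auto
  moreover have "Ub q k (J - S) r \<le> (\<Sum>i<k. Top q r J ((k - i) * (q - 1) - 1))"
    unfolding Ub_def using assms by (intro sum_mono Top_mono) auto
  ultimately show ?thesis by linarith
qed

lemma Ub_special:
  assumes sp: "special q (Suc k) s J r" and q: "q \<ge> 3" and X: "X \<subseteq> J"
  shows "Ub q k X r \<le> Tt q k (s+1)"
proof -
  have finJ: "finite J" using sp by (simp add: special_def)
  have "Ub q k X r \<le> (\<Sum>i<k. Wh q ((s+1)+i+1) ((s+1)+k))"
    unfolding Ub_def
  proof (intro sum_mono)
    fix i assume i: "i \<in> {..<k}"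
    show "Top q r X ((k - i) * (q - 1) - 1) \<le> Wh q ((s+1)+i+1) ((s+1)+k)"
    proof (rule Top_le)
      show "finite X" using finJ X finite_subset by blast
      fix Y assume Y: "Y \<subseteq> X" "card Y \<le> (k - i) * (q - 1) - 1"
      have "wsum q r Y \<le> Wh q (s+i+2) (s + Suc k)"
        by (rule KL[OF sp q]) (use i Y X in auto)
      then show "wsum q r Y \<le> Wh q ((s+1)+i+1) ((s+1)+k)" by simp
    qed
  qed
  also have "\<dots> = Tt q k (s+1)" by (rule Tt_sum)
  finally show ?thesis .
qed



lemma card_ge2: "CARD('a::{field,finite}) \<ge> 2"
proof -
  have "{0::'a, 1} \<subseteq> UNIV" by simp
  then have "card {0::'a,1} \<le> CARD('a)" by (intro card_mono) auto
  then show ?thesis by simp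
qed

lemma of_nat_card0: "of_nat CARD('a::{field,finite}) = (0::'a)"
proof -
  have "(\<Sum>x\<in>(UNIV::'a set). x + 1) = (\<Sum>x\<in>UNIV. x)"
    by (rule sum.reindex_bij_witness[of _ "\<lambda>x. x - 1" "\<lambda>x. x + 1"]) auto
  then show ?thesis by (simp add: sum.distrib)
qed

lemma pow_card: "(x::'a::{field,finite}) ^ CARD('a) = x"
proof (cases "x = 0")
  case False
  have "x * (\<Prod>y\<in>UNIV-{0}. x * y) = x * x ^ (card (UNIV :: 'a set) - 1) * \<Prod>(UNIV-{0})"
    by (simp add: prod.distrib mult_ac)
  also have "x * x ^ (card (UNIV :: 'a set) - 1) = x ^ Suc (card (UNIV :: 'a set) - 1)"
    by (subst power_Suc) auto
  also have "Suc (card (UNIV :: 'a set) - 1) = card (UNIV :: 'a set)"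
    using finite_UNIV_card_ge_0[where ?'a = 'a] by simp
  also have "(\<Prod>y\<in>UNIV-{0}. x * y) = (\<Prod>y\<in>UNIV-{0}. y)"
    by (rule prod.reindex_bij_witness[of _ "\<lambda>y. y / x" "\<lambda>y. x * y"]) (use False in auto)
  finally show ?thesis
    by simp
qed (use finite_UNIV_card_ge_0[where ?'a = 'a] in auto)

lemma pow_Q: "(x::'a::{field,finite}) \<noteq> 0 \<Longrightarrow> x ^ (CARD('a) - 1) = 1"
proof -
  assume x: "x \<noteq> 0"
  have "x * x ^ (CARD('a) - 1) = x ^ CARD('a)"
    using card_ge2[where 'a='a] by (metis Suc_diff_1 less_le_trans pos2 power_Suc)
  then have "x * x ^ (CARD('a) - 1) = x * 1" using pow_card[of x] by simp
  then show ?thesis using x by simp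
qed

definition sig :: "nat \<Rightarrow> 'a::{field,finite}" where "sig m = (\<Sum>x\<in>UNIV. x ^ m)"

lemma exists_not_root:
  assumes "0 < r" "r < CARD('a::{field,finite}) - 1"
  shows "\<exists>g::'a. g \<noteq> 0 \<and> g ^ r \<noteq> 1"
proof (rule ccontr)
  assume "\<not> ?thesis"
  then have all: "\<forall>g::'a. g \<noteq> 0 \<longrightarrow> g ^ r = 1" by blast
  let ?p = "monom (1::'a) r + [:-1:]"
  have dp: "degree ?p = r" using assms by (subst degree_add_eq_left) (auto simp: degree_monom_eq)
  then have "?p \<noteq> 0" using assms by auto
  then have "card {x. poly ?p x = 0} \<le> r" using card_poly_roots_bound dp by metis
  moreover have "UNIV - {0} \<subseteq> {x. poly ?p x = 0}" using all by (auto simp: poly_monom)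
  then have "card (UNIV - {0::'a}) \<le> card {x. poly ?p x = 0}" by (intro card_mono) auto
  ultimately show False using assms by (simp add: card_Diff_singleton)
qed

lemma sig_nonzero_part: "0 < m \<Longrightarrow> sig m = (\<Sum>x\<in>UNIV-{0::'a::{field,finite}}. x ^ m)"
  unfolding sig_def by (subst sum.remove[of UNIV 0]) auto

lemma sig_eq:
  "sig m = (if 0 < m \<and> (CARD('a::{field,finite}) - 1) dvd m then - 1 else (0::'a))"
proof -
  let ?Q = "CARD('a) - 1"
  have Q: "?Q \<ge> 1" using card_ge2[where 'a='a] by simp
  show ?thesis
  proof (cases "m = 0")
    case True
    then show ?thesis by (simp add: sig_def of_nat_card0)
  next
    case False
    then have m: "0 < m" by simp
    have red: "x ^ m = x ^ (m mod ?Q)" if "x \<noteq> 0" for x :: 'a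
    proof -
      have "x ^ m = x ^ (?Q * (m div ?Q) + m mod ?Q)" by simp
      also have "\<dots> = (x ^ ?Q) ^ (m div ?Q) * x ^ (m mod ?Q)" by (simp only: power_add power_mult)
      finally show ?thesis using pow_Q[OF that] by simp
    qed
    have s: "sig m = (\<Sum>x\<in>UNIV-{0::'a}. x ^ (m mod ?Q))"
      unfolding sig_nonzero_part[OF m] by (rule sum.cong) (auto simp: red)
    show ?thesis
    proof (cases "?Q dvd m")
      case True
      then have "(sig m :: 'a) = of_nat (card (UNIV - {0::'a}))" using s by simp
      also have "\<dots> = of_nat CARD('a) - 1" using card_ge2[where 'a='a]
        by (simp add: card_Diff_singleton of_nat_diff)
      finally show ?thesis using True m by (simp add: of_nat_card0)
    next
      case False
      let ?r = "m mod ?Q"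
      have r1: "0 < ?r" using False by (metis dvd_eq_mod_eq_0 gr0I)
      have r: "0 < ?r" "?r < ?Q" using r1 Q by auto
      obtain g :: 'a where g: "g \<noteq> 0" "g ^ ?r \<noteq> 1" using exists_not_root[OF r] by blast
      have "(\<Sum>x\<in>UNIV-{0::'a}. x ^ ?r) = (\<Sum>x\<in>UNIV-{0::'a}. (g * x) ^ ?r)"
        by (rule sum.reindex_bij_witness[of _ "\<lambda>y. g * y" "\<lambda>y. y / g"]) (use g in auto)
      also have "\<dots> = g ^ ?r * (\<Sum>x\<in>UNIV-{0::'a}. x ^ ?r)"
        by (simp add: power_mult_distrib sum_distrib_left)
      finally have "(1 - g ^ ?r) * (\<Sum>x\<in>UNIV-{0::'a}. x ^ ?r) = 0" by (simp add: algebra_simps)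
      then have "(\<Sum>x\<in>UNIV-{0::'a}. x ^ ?r) = 0" using g by simp
      then show ?thesis using s False by simp
    qed
  qed
qed



lemma choose_zero:
  assumes "0 < k" "k < CARD('a::{field,finite})"
  shows "of_nat (CARD('a) choose k) = (0::'a)"
proof -
  let ?q = "CARD('a)"
  define P :: "'a poly" where "P = (\<Sum>i\<in>{1..<?q}. monom (of_nat (?q choose i)) i)"
  have dP: "degree P \<le> ?q - 1" unfolding P_def
    by (intro degree_sum_le) (auto intro: order.trans[OF degree_monom_le])
  have ev: "poly P x = 0" for x :: 'a
  proof -
    have "(x + 1) ^ ?q = (\<Sum>i\<le>?q. of_nat (?q choose i) * x ^ i * 1 ^ (?q - i))"
      by (rule binomial_ring)
    also have "{..?q} = insert 0 (insert ?q {1..<?q})" using card_ge2[where 'a='a] by auto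
    also have "(\<Sum>i\<in>insert 0 (insert ?q {1..<?q}). of_nat (?q choose i) * x ^ i * 1 ^ (?q - i))
       = 1 + (x ^ ?q + poly P x)"
      using card_ge2[where 'a='a] by (simp add: P_def poly_sum poly_monom)
    finally show ?thesis using pow_card[of x] pow_card[of "x+1"] by simp
  qed
  have "P = 0"
  proof (rule ccontr)
    assume "P \<noteq> 0"
    then have "card {x. poly P x = 0} \<le> degree P" by (rule card_poly_roots_bound)
    moreover have "{x. poly P x = 0} = UNIV" using ev by auto
    ultimately show False using dP card_ge2[where 'a='a] by simp
  qed
  then have "coeff P k = 0" by simp
  moreover have "coeff P k = of_nat (?q choose k)"
    unfolding P_def coeff_sum using assms by (simp add: sum.delta)
  ultimately show ?thesis by simp
qed

lemma freshman:
  fixes x y :: "'a::{field,finite} poly"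
  shows "(x + y) ^ CARD('a) = x ^ CARD('a) + y ^ CARD('a)"
proof -
  let ?q = "CARD('a)"
  have "(x + y) ^ ?q = (\<Sum>k\<le>?q. of_nat (?q choose k) * x ^ k * y ^ (?q - k))"
    by (rule binomial_ring)
  also have "\<dots> = (\<Sum>k\<in>{0, ?q}. of_nat (?q choose k) * x ^ k * y ^ (?q - k))"
  proof (intro sum.mono_neutral_right ballI)
    fix k assume "k \<in> {..?q} - {0, ?q}"
    hence k: "k > 0" "k < ?q" by auto
    have "of_nat (?q choose k) = (0 :: 'a poly)"
      using choose_zero[OF k] by (simp add: of_nat_poly)
    thus "of_nat (?q choose k) * x ^ k * y ^ (?q - k) = 0" by simp
  qed auto
  finally show ?thesis using card_ge2[where 'a='a] by (simp add: add_ac)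
qed

lemma freshman_sum:
  fixes f :: "'b \<Rightarrow> 'a::{field,finite} poly"
  shows "(sum f A) ^ (CARD('a) ^ j) = (\<Sum>i\<in>A. f i ^ (CARD('a) ^ j))"
proof (induction j)
  case 0 then show ?case by simp
next
  case (Suc j)
  have q: "(sum g B) ^ CARD('a) = (\<Sum>i\<in>B. g i ^ CARD('a))" for g :: "'b \<Rightarrow> 'a poly" and B
    by (induction B rule: infinite_finite_induct) (auto simp: freshman power_0_left card_ge2)
  have "(sum f A) ^ (CARD('a) ^ Suc j) = ((sum f A) ^ (CARD('a) ^ j)) ^ CARD('a)"
    by (simp only: power_Suc2 power_mult)
  also have "\<dots> = (\<Sum>i\<in>A. (f i ^ (CARD('a) ^ j)) ^ CARD('a))" using Suc q by simp
  finally show ?case by (simp only: power_Suc2 power_mult)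
qed



definition Lf :: "nat \<Rightarrow> 'a list \<Rightarrow> nat \<Rightarrow> 'a::{field,finite} poly" where
  "Lf k c j = monom 1 (k * CARD('a) ^ j) + (\<Sum>i<k. monom (c!i) (i * CARD('a) ^ j))"

definition Gp :: "nat \<Rightarrow> nat set \<Rightarrow> (nat \<Rightarrow> nat) \<Rightarrow> 'a::{field,finite} poly" where
  "Gp k J r = (\<Sum>c\<in>{c::'a list. length c = k}. \<Prod>t\<in>J. Lf k c (r t))"

lemma finite_lists: "finite {c::'a::finite list. length c = k}"
  using finite_lists_length_eq[of "UNIV::'a set" k] by simp

lemma sum_lists_Suc:
  "(\<Sum>c\<in>{c::'a::finite list. length c = Suc k}. f c) = (\<Sum>x\<in>UNIV. \<Sum>c\<in>{c. length c = k}. f (x # c))"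
proof -
  have e: "{c::'a list. length c = Suc k} = (\<lambda>(x, c). x # c) ` (UNIV \<times> {c. length c = k})"
    by (auto simp: length_Suc_conv image_iff)
  have i: "inj_on (\<lambda>(x, c). x # c) (UNIV \<times> {c::'a list. length c = k})"
    by (auto simp: inj_on_def)
  show ?thesis unfolding e
    by (subst sum.reindex[OF i]) (auto simp: sum.cartesian_product intro!: sum.cong)
qed

lemma Lf_Suc: "Lf (Suc k) (x # c) j = [:x:] + monom 1 (CARD('a) ^ j) * Lf k c j"
  for x :: "'a::{field,finite}"
proof -
  have "Lf (Suc k) (x # c) j = monom 1 (Suc k * CARD('a) ^ j) +
     ((\<Sum>i<k. monom (c!i) (Suc i * CARD('a) ^ j)) + monom x 0)"
    unfolding Lf_def by (subst sum.lessThan_Suc_shift) simp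
  also have "\<dots> = [:x:] + monom 1 (CARD('a) ^ j) * Lf k c j"
    unfolding Lf_def by (simp add: algebra_simps sum_distrib_left mult_monom monom_0)
  finally show ?thesis .
qed

lemma prod_monom1: "finite A \<Longrightarrow> (\<Prod>t\<in>A. monom (1::'a::comm_semiring_1) (f t)) = monom 1 (\<Sum>t\<in>A. f t)"
  by (induction A rule: finite_induct) (auto simp: mult_monom)

lemma const_pow: "[:x:] ^ n = [:x ^ n:]"
  by (induction n) (auto simp: algebra_simps)

lemma smult_sum2: "smult a (sum f A) = (\<Sum>x\<in>A. smult a (f x))"
  by (induction A rule: infinite_finite_induct) (auto simp: smult_add_right)

lemma Gp_rec:
  assumes "finite J"
  shows "(Gp (Suc k) J r :: 'a::{field,finite} poly) =
    (\<Sum>S\<in>Pow J. smult (sig (card S)) (monom 1 (wsum CARD('a) r (J - S)) * Gp k (J - S) r))"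
proof -
  let ?q = "CARD('a)"
  let ?L = "\<lambda>c j. Lf k c j :: 'a poly"
  have step: "(\<Prod>t\<in>J. Lf (Suc k) (x # c) (r t)) =
     (\<Sum>S\<in>Pow J. smult (x ^ card S) (monom 1 (wsum ?q r (J - S)) * (\<Prod>t\<in>J - S. ?L c (r t))))"
    for x :: 'a and c
  proof -
    have "(\<Prod>t\<in>J. Lf (Suc k) (x # c) (r t)) = (\<Prod>t\<in>J. [:x:] + monom 1 (?q ^ r t) * ?L c (r t))"
      by (simp add: Lf_Suc)
    also have "\<dots> = (\<Sum>S\<in>Pow J. (\<Prod>t\<in>S. [:x:]) * (\<Prod>t\<in>J - S. monom 1 (?q ^ r t) * ?L c (r t)))"
      by (rule prod_add[OF assms])
    also have "\<dots> = (\<Sum>S\<in>Pow J. smult (x ^ card S) (monom 1 (wsum ?q r (J - S)) * (\<Prod>t\<in>J - S. ?L c (r t))))"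
    proof (rule sum.cong[OF refl])
      fix S assume S: "S \<in> Pow J"
      have fin: "finite (J - S)" using assms by simp
      have "(\<Prod>t\<in>S. [:x:]) = [:x ^ card S:]" by (simp add: const_pow)
      moreover have "(\<Prod>t\<in>J - S. monom 1 (?q ^ r t) * ?L c (r t)) =
          monom 1 (wsum ?q r (J - S)) * (\<Prod>t\<in>J - S. ?L c (r t))"
        by (simp add: prod.distrib prod_monom1[OF fin] wsum_def)
      ultimately show "(\<Prod>t\<in>S. [:x:]) * (\<Prod>t\<in>J - S. monom 1 (?q ^ r t) * ?L c (r t)) =
          smult (x ^ card S) (monom 1 (wsum ?q r (J - S)) * (\<Prod>t\<in>J - S. ?L c (r t)))"
        by simp
    qed
    finally show ?thesis .
  qed
  have "Gp (Suc k) J r = (\<Sum>x\<in>UNIV. \<Sum>c\<in>{c::'a list. length c = k}. \<Prod>t\<in>J. Lf (Suc k) (x # c) (r t))"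
    unfolding Gp_def by (rule sum_lists_Suc)
  also have "\<dots> = (\<Sum>x\<in>UNIV. \<Sum>c\<in>{c::'a list. length c = k}. \<Sum>S\<in>Pow J.
      smult (x ^ card S) (monom 1 (wsum ?q r (J - S)) * (\<Prod>t\<in>J - S. ?L c (r t))))"
    by (simp add: step)
  also have "\<dots> = (\<Sum>x\<in>UNIV. \<Sum>S\<in>Pow J. \<Sum>c\<in>{c::'a list. length c = k}.
      smult (x ^ card S) (monom 1 (wsum ?q r (J - S)) * (\<Prod>t\<in>J - S. ?L c (r t))))"
    by (rule sum.cong[OF refl], rule sum.swap)
  also have "\<dots> = (\<Sum>S\<in>Pow J. \<Sum>x\<in>UNIV. \<Sum>c\<in>{c::'a list. length c = k}.
      smult (x ^ card S) (monom 1 (wsum ?q r (J - S)) * (\<Prod>t\<in>J - S. ?L c (r t))))"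
    by (rule sum.swap)
  also have "\<dots> = (\<Sum>S\<in>Pow J. smult (sig (card S)) (monom 1 (wsum ?q r (J - S)) * Gp k (J - S) r))"
    unfolding Gp_def sig_def
    by (rule sum.cong[OF refl]) (simp only: smult_sum smult_sum2 sum_distrib_left, rule sum.swap)
  finally show ?thesis .
qed



lemma sig_cases:
  assumes "sig m \<noteq> (0::'a::{field,finite})"
  shows "m = CARD('a) - 1 \<or> 2 * (CARD('a) - 1) \<le> m"
proof -
  have m: "0 < m" "(CARD('a) - 1) dvd m" using assms sig_eq[of m, where 'a='a] by (auto split: if_splits)
  then obtain j where j: "m = (CARD('a) - 1) * j" by blast
  with m have "j \<noteq> 0" by auto
  then have "j = 1 \<or> 2 \<le> j" by arith
  then show ?thesis using j by auto
qed

lemma sig_Q: "sig (CARD('a) - 1) = (- 1 :: 'a::{field,finite})"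
  using card_ge2[where 'a='a] by (simp add: sig_eq)

lemma Gp_0: "Gp 0 J r = (1::'a::{field,finite} poly)"
proof -
  have "{c::'a list. length c = 0} = {[]}" by auto
  then show ?thesis unfolding Gp_def Lf_def by simp
qed

lemma ar1: "s \<le> j \<Longrightarrow> (Q::nat) \<le> s \<Longrightarrow> c = j - s \<Longrightarrow> S = Q + kQ \<Longrightarrow> j < S \<Longrightarrow> c < kQ" by arith
lemma ar2: "SS = 2 * Q + kQ \<Longrightarrow> c = j - s \<Longrightarrow> 2 * (Q::nat) \<le> s \<Longrightarrow> j = SS - 1 \<Longrightarrow> 1 \<le> Q \<Longrightarrow> s \<le> j \<Longrightarrow> c < kQ" by arith

lemma Gp_vanish:
  "finite J \<Longrightarrow> card J < k * (CARD('a) - 1) \<Longrightarrow> (Gp k J r :: 'a::{field,finite} poly) = 0"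
proof (induction k arbitrary: J)
  case 0 then show ?case by simp
next
  case (Suc k)
  show ?case
    unfolding Gp_rec[OF Suc.prems(1)]
  proof (rule sum.neutral, rule ballI)
    fix S assume S: "S \<in> Pow J"
    show "smult (sig (card S)) (monom 1 (wsum CARD('a) r (J - S)) * Gp k (J - S) r) = (0::'a poly)"
    proof (cases "sig (card S) = (0::'a)")
      case False
      then have "CARD('a) - 1 \<le> card S" using sig_cases[OF False] by auto
      moreover have "card (J - S) = card J - card S" using S Suc.prems(1)
        by (simp add: card_Diff_subset finite_subset)
      moreover have "Suc k * (CARD('a) - 1) = (CARD('a) - 1) + k * (CARD('a) - 1)" by simp
      moreover have "card S \<le> card J" using S Suc.prems(1) by (simp add: card_mono)
      ultimately have "card (J - S) < k * (CARD('a) - 1)" using Suc.prems(2)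
        by (metis ar1)
      then have "Gp k (J - S) r = (0::'a poly)" using Suc.IH Suc.prems(1) by simp
      then show ?thesis by simp
    qed simp
  qed
qed

lemma degree_term:
  "degree (smult a (monom (1::'a::field) w * P)) \<le> w + degree P"
proof -
  have "degree (smult a (monom (1::'a) w * P)) \<le> degree (monom (1::'a) w * P)" by simp
  also have "\<dots> \<le> degree (monom (1::'a) w) + degree P" by (rule degree_mult_le)
  also have "\<dots> \<le> w + degree P" using degree_monom_le by simp
  finally show ?thesis .
qed

lemma Gp_bound:
  "finite J \<Longrightarrow> card J = Suc k * (CARD('a) - 1) - 1 \<Longrightarrow>
   degree (Gp k J r :: 'a::{field,finite} poly) \<le> Ub CARD('a) k J r"
proof (induction k arbitrary: J)
  case 0 then show ?case by (simp add: Gp_0)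
next
  case (Suc k)
  let ?Q = "CARD('a) - 1"
  have Q: "?Q \<ge> 1" using card_ge2[where 'a='a] by simp
  show ?case
    unfolding Gp_rec[OF Suc.prems(1)]
  proof (rule degree_sum_le)
    show "finite (Pow J)" using Suc.prems(1) by simp
    fix S assume S: "S \<in> Pow J"
    have cS: "card (J - S) = card J - card S" using S Suc.prems(1)
      by (simp add: card_Diff_subset finite_subset)
    show "degree (smult (sig (card S)) (monom 1 (wsum CARD('a) r (J - S)) * Gp k (J - S) r) :: 'a poly)
       \<le> Ub CARD('a) (Suc k) J r"
    proof (cases "sig (card S) = (0::'a)")
      case False
      then have "card S = ?Q \<or> 2 * ?Q \<le> card S" by (rule sig_cases)
      then show ?thesis
      proof
        assume c: "card S = ?Q"
        have c2: "card (J - S) = Suc k * ?Q - 1" using cS c Suc.prems(2) Q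
          by (simp add: algebra_simps)
        have "degree (smult (sig (card S)) (monom 1 (wsum CARD('a) r (J - S)) * Gp k (J - S) r) :: 'a poly)
          \<le> wsum CARD('a) r (J - S) + degree (Gp k (J - S) r :: 'a poly)" by (rule degree_term)
        also have "\<dots> \<le> wsum CARD('a) r (J - S) + Ub CARD('a) k (J - S) r"
          using Suc.IH[of "J - S"] Suc.prems(1) c2 by simp
        also have "\<dots> \<le> Ub CARD('a) (Suc k) J r"
          by (rule Ub_step) (use Suc.prems(1) S c2 in auto)
        finally show ?thesis .
      next
        assume c: "2 * ?Q \<le> card S"
        have "Suc (Suc k) * ?Q = 2 * ?Q + k * ?Q" by simp
        moreover have "card S \<le> card J" using S Suc.prems(1) by (simp add: card_mono)
        ultimately have "card (J - S) < k * ?Q" using cS c Suc.prems(2) Q by (metis ar2)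
        then have "Gp k (J - S) r = (0::'a poly)" by (rule Gp_vanish[rotated]) (use Suc.prems(1) in auto)
        then show ?thesis by simp
      qed
    qed simp
  qed
qed



lemma Gp_special:
  assumes "special CARD('a::{field,finite}) k s J r" "CARD('a) \<ge> 3"
  shows "degree (Gp k J r :: 'a poly) = Tt CARD('a) k s \<and> coeff (Gp k J r :: 'a poly) (Tt CARD('a) k s) = 1"
  using assms
proof (induction k arbitrary: s J)
  case 0 then show ?case by (simp add: Gp_0)
next
  case (Suc k)
  let ?q = "CARD('a)" let ?Q = "CARD('a) - 1"
  note sp = Suc.prems(1) and q = Suc.prems(2)
  have finJ: "finite J" using sp by (simp add: special_def)
  have cJ: "card J = Suc (Suc k) * ?Q - 1" by (rule card_special[OF sp q])
  define D where "D = Tt ?q (Suc k) s"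
  define W where "W = Wh ?q (s+1) (s + Suc k)"
  have D: "D = W + Tt ?q k (s+1)" unfolding D_def W_def by simp
  define V0 where "V0 = {t\<in>J. r t = s}"
  define V1 where "V1 = {t\<in>J. r t = s + 1}"
  define M where "M = (\<lambda>z. insert z V0) ` V1"
  define tm where "tm S = (smult (sig (card S)) (monom 1 (wsum ?q r (J - S)) * Gp k (J - S) r) :: 'a poly)" for S
  have G: "Gp (Suc k) J r = (\<Sum>S\<in>Pow J. tm S)"
    by (simp add: tm_def Gp_rec[OF finJ])
  have each: "degree (tm S) \<le> D \<and> coeff (tm S) D = (if S \<in> M then -1 else 0)" if S: "S \<in> Pow J" for S
  proof (cases "S \<in> M")
    case True
    then obtain z where z: "z \<in> V1" "S = insert z V0" unfolding M_def by blast
    have zJ: "z \<in> J" "r z = s + 1" using z unfolding V1_def by auto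
    note st = special_step[OF sp q zJ]
    have S': "S = insert z {t\<in>J. r t = s}" using z V0_def by simp
    have sp': "special ?q k (s+1) (J - S) r" and cS: "card S = ?Q" and wS: "wsum ?q r (J - S) = W"
      using st unfolding S'[symmetric] W_def by auto
    have IH: "degree (Gp k (J - S) r :: 'a poly) = Tt ?q k (s+1)" "coeff (Gp k (J - S) r :: 'a poly) (Tt ?q k (s+1)) = 1"
      using Suc.IH[OF sp' q] by auto
    have t: "tm S = smult (-1) (monom 1 W * Gp k (J - S) r)" unfolding tm_def cS wS sig_Q by simp
    have "degree (tm S) \<le> W + degree (Gp k (J - S) r :: 'a poly)" unfolding t by (rule degree_term)
    then have dg: "degree (tm S) \<le> D" using IH D by simp
    have "coeff (tm S) D = - 1" unfolding t D using IH by (simp add: coeff_monom_mult)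
    then show ?thesis using dg True by simp
  next
    case False
    have "tm S = 0 \<or> degree (tm S) < D"
    proof (cases "sig (card S) = (0::'a)")
      case True then show ?thesis unfolding tm_def by simp
    next
      case sg: False
      have cS: "card (J - S) = card J - card S" using S finJ
        by (simp add: card_Diff_subset finite_subset)
      have cSJ: "card S \<le> card J" using S finJ by (simp add: card_mono)
      from sig_cases[OF sg] show ?thesis
      proof
        assume c: "card S = ?Q"
        have c2: "card (J - S) = Suc k * ?Q - 1" using cS c cJ q by (simp add: algebra_simps)
        have X: "J - S \<subseteq> J" by auto
        have "degree (tm S) \<le> wsum ?q r (J - S) + degree (Gp k (J - S) r :: 'a poly)"
          unfolding tm_def by (rule degree_term)
        also have "degree (Gp k (J - S) r :: 'a poly) \<le> Ub ?q k (J - S) r"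
          by (rule Gp_bound) (use finJ c2 in auto)
        also have "Ub ?q k (J - S) r \<le> Tt ?q k (s+1)" by (rule Ub_special[OF sp q X])
        also have "wsum ?q r (J - S) < W"
        proof -
          have le: "wsum ?q r (J - S) \<le> W" unfolding W_def
            by (rule KL[OF sp q]) (use c2 in auto)
          have "wsum ?q r (J - S) \<noteq> W"
          proof
            assume eq: "wsum ?q r (J - S) = W"
            have "\<exists>z\<in>J. r z = s + 1 \<and> J - S = {t\<in>J. s + 1 \<le> r t} - {z}"
              by (rule KS[OF sp q]) (use eq c2 W_def in auto)
            then obtain z where z: "z \<in> J" "r z = s + 1" "J - S = {t\<in>J. s + 1 \<le> r t} - {z}" by blast
            have "S = J - (J - S)" using S by auto
            also have "\<dots> = insert z V0" using z sp unfolding V0_def special_def by auto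
            finally have "S \<in> M" unfolding M_def V1_def using z by auto
            then show False using False by simp
          qed
          then show ?thesis using le by simp
        qed
        finally show ?thesis using D by simp
      next
        assume c: "2 * ?Q \<le> card S"
        have "Suc (Suc k) * ?Q = 2 * ?Q + k * ?Q" by simp
        then have "card (J - S) < k * ?Q" by (rule ar2[OF _ cS c cJ _ cSJ]) (use q in simp)
        then have "Gp k (J - S) r = (0::'a poly)" by (rule Gp_vanish[rotated]) (use finJ in auto)
        then show ?thesis unfolding tm_def by simp
      qed
    qed
    then show ?thesis using False by (auto simp: coeff_eq_0)
  qed
  have MJ: "M \<subseteq> Pow J" unfolding M_def V0_def V1_def by auto
  have cM: "card M = ?Q"
  proof -
    have "inj_on (\<lambda>z. insert z V0) V1" unfolding inj_on_def V0_def V1_def by auto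
    then have "card M = card V1" unfolding M_def by (rule card_image)
    also have "card V1 = ?Q" using sp unfolding V1_def special_def by auto
    finally show ?thesis .
  qed
  have dG: "degree (Gp (Suc k) J r :: 'a poly) \<le> D"
    unfolding G by (rule degree_sum_le) (use finJ each in auto)
  have "coeff (Gp (Suc k) J r :: 'a poly) D = (\<Sum>S\<in>Pow J. if S \<in> M then -1 else 0)"
    unfolding G coeff_sum using each by (intro sum.cong) auto
  also have "\<dots> = - of_nat (card M)"
    using MJ finJ by (simp add: sum.If_cases Int_absorb1 finite_subset)
  also have "\<dots> = (1::'a)" using cM card_ge2[where 'a='a] of_nat_card0[where 'a='a]
    by (simp add: of_nat_diff)
  finally have cD: "coeff (Gp (Suc k) J r :: 'a poly) D = 1" .
  then have "D \<le> degree (Gp (Suc k) J r :: 'a poly)" by (intro le_degree) simp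
  then show ?case using dG cD D_def by simp
qed



definition ac :: "nat \<Rightarrow> 'a list \<Rightarrow> 'a::{field,finite} poly" where
  "ac k c = monom 1 k + (\<Sum>i<k. monom (c!i) i)"

lemma coeff_ac: "coeff (ac k c) j = (if j = k then 1 else if j < k then c!j else 0)"
  unfolding ac_def by (auto simp: coeff_sum)

lemma degree_ac: "degree (ac k c) = k"
proof (rule antisym)
  show "degree (ac k c) \<le> k" by (rule degree_le) (auto simp: coeff_ac)
  show "k \<le> degree (ac k c)" by (rule le_degree) (simp add: coeff_ac)
qed

lemma monic_img: "monic_deg k = (ac k ` {c::'a::{field,finite} list. length c = k})"
proof
  show "ac k ` {c. length c = k} \<subseteq> monic_deg k"
    by (auto simp: monic_deg_def degree_ac coeff_ac)
  show "monic_deg k \<subseteq> ac k ` {c::'a list. length c = k}"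
  proof
    fix a :: "'a poly" assume "a \<in> monic_deg k"
    then have a: "lead_coeff a = 1" "degree a = k" by (auto simp: monic_deg_def)
    have "a = ac k (map (coeff a) [0..<k])"
      by (rule poly_eqI) (use a in \<open>auto simp: coeff_ac coeff_eq_0\<close>)
    then show "a \<in> ac k ` {c::'a list. length c = k}" by force
  qed
qed

lemma inj_ac: "inj_on (ac k) {c::'a::{field,finite} list. length c = k}"
proof
  fix c c' :: "'a list" assume c: "c \<in> {c. length c = k}" "c' \<in> {c. length c = k}" and e: "ac k c = ac k c'"
  show "c = c'"
  proof (rule nth_equalityI)
    show "length c = length c'" using c by simp
    fix i assume "i < length c"
    then show "c!i = c'!i" using arg_cong[OF e, of "\<lambda>p. coeff p i"] c by (simp add: coeff_ac)
  qed
qed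

lemma S_pow_ac: "S_pow k n = (\<Sum>c\<in>{c::'a::{field,finite} list. length c = k}. ac k c ^ n)"
  unfolding S_pow_def monic_img by (subst sum.reindex[OF inj_ac]) simp

lemma pow_card_pow: "(x::'a::{field,finite}) ^ (CARD('a) ^ j) = x"
proof (induction j)
  case (Suc j)
  have "x ^ (CARD('a) ^ Suc j) = (x ^ (CARD('a) ^ j)) ^ CARD('a)" by (simp only: power_Suc2 power_mult)
  then show ?case using Suc pow_card by simp
qed simp

lemma ac_frob: "ac k c ^ (CARD('a) ^ j) = (Lf k c j :: 'a::{field,finite} poly)"
proof -
  let ?d = "\<lambda>i. if i = k then 1 else c!i"
  have e: "ac k c = (\<Sum>i<Suc k. monom (?d i) i)" unfolding ac_def by (simp add: add.commute)
  have "ac k c ^ (CARD('a) ^ j) = (\<Sum>i<Suc k. monom (?d i) i ^ (CARD('a) ^ j))"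
    unfolding e by (rule freshman_sum)
  also have "\<dots> = (\<Sum>i<Suc k. monom (?d i) (i * CARD('a) ^ j))"
    by (simp add: monom_power pow_card_pow)
  also have "\<dots> = Lf k c j" unfolding Lf_def by (simp add: add.commute)
  finally show ?thesis .
qed



lemma div_eq_iff_nat: "0 < (Q::nat) \<Longrightarrow> (x div Q = v) \<longleftrightarrow> v * Q \<le> x \<and> x < Suc v * Q"
  by (metis div_less_iff_less_mult div_nat_eqI div_times_less_eq_dividend
    lessI mult.commute)

lemma special0:
  assumes q: "q \<ge> (3::nat)"
  shows "special q K 0 {..<Suc K * (q - 1) - 1} (\<lambda>t. (t + 1) div (q - 1))"
  unfolding special_def
proof (intro conjI ballI allI impI)
  let ?Q = "q - 1"
  have Q: "0 < ?Q" using q by simp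
  show "finite {..<Suc K * (q - 1) - 1}" by simp
  fix t assume t: "t \<in> {..<Suc K * (q - 1) - 1}"
  show "0 \<le> (t + 1) div (q - 1)" by simp
  have "t + 1 < Suc K * ?Q" using t by auto
  then have "(t + 1) div (q - 1) \<le> K" using Q by (metis div_less_iff_less_mult less_Suc_eq_le)
  then show "(t + 1) div (q - 1) \<le> 0 + K" by simp
next
  let ?Q = "q - 1"
  have Q: "0 < ?Q" using q by simp
  have "?Q \<le> Suc K * ?Q" by simp
  then have "{t \<in> {..<Suc K * ?Q - 1}. (t + 1) div ?Q = 0} = {..<?Q - 1}"
    using Q by (auto simp: div_eq_iff_nat)
  then show "card {t \<in> {..<Suc K * (q - 1) - 1}. (t + 1) div (q - 1) = 0} = q - 2" by simp
next
  let ?Q = "q - 1"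
  have Q: "0 < ?Q" using q by simp
  fix v assume v: "0 < v" "v \<le> 0 + K"
  define a where "a = v * ?Q"
  define b where "b = Suc K * ?Q"
  have ab: "a + ?Q \<le> b" unfolding a_def b_def using v by (simp add: add_mult_distrib2[symmetric])
  have a1: "1 \<le> a" unfolding a_def using v Q by simp
  have "{t \<in> {..<b - 1}. (t + 1) div ?Q = v} = {t. t < b - 1 \<and> a \<le> t + 1 \<and> t + 1 < a + ?Q}"
    unfolding a_def using Q by (auto simp: div_eq_iff_nat add.commute)
  also have "\<dots> = {a - 1..<a + ?Q - 1}" using ab a1 by auto
  finally show "card {t \<in> {..<Suc K * (q - 1) - 1}. (t + 1) div (q - 1) = v} = q - 1"
    using a1 unfolding b_def by simp
qed



abbreviation "J0 q K \<equiv> {..<Suc K * (q - 1) - 1}"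
abbreviation "r0 q \<equiv> (\<lambda>t::nat. (t + 1) div (q - 1))"

lemma wsum0:
  assumes q: "q \<ge> (3::nat)"
  shows "wsum q (r0 q) (J0 q K) = q ^ Suc K - 2"
proof -
  note sp = special0[OF q, of K]
  let ?J = "J0 q K" and ?r = "r0 q"
  have e: "?J = {t\<in>?J. ?r t = 0} \<union> {t\<in>?J. 1 \<le> ?r t}" by auto
  have "wsum q ?r ?J = wsum q ?r {t\<in>?J. ?r t = 0} + wsum q ?r {t\<in>?J. 1 \<le> ?r t}"
    by (subst e, rule wsum_union) auto
  moreover have "wsum q ?r {t\<in>?J. ?r t = 0} = q - 2"
  proof -
    have "wsum q ?r {t\<in>?J. ?r t = 0} = card {t\<in>?J. ?r t = 0}" unfolding wsum_def by simp
    also have "\<dots> = q - 2" using sp by (simp add: special_def)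
    finally show ?thesis .
  qed
  moreover have "wsum q ?r {t\<in>?J. 1 \<le> ?r t} + q = q ^ Suc K"
    using special_hi(2)[OF sp q, of 1] by simp
  moreover have "q \<le> q ^ Suc K" using q by simp
  ultimately show ?thesis using q by linarith
qed

lemma S_pow_Gp:
  assumes q: "CARD('a::{field,finite}) \<ge> 3"
  shows "(S_pow k (CARD('a) ^ Suc K - 2) :: 'a poly) = Gp k (J0 CARD('a) K) (r0 CARD('a))"
proof -
  let ?q = "CARD('a)"
  have "ac k c ^ (?q ^ Suc K - 2) = (\<Prod>t\<in>J0 ?q K. Lf k c (r0 ?q t))" for c :: "'a list"
  proof -
    have "ac k c ^ (?q ^ Suc K - 2) = ac k c ^ (wsum ?q (r0 ?q) (J0 ?q K))" using wsum0[OF q] by simp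
    also have "\<dots> = (\<Prod>t\<in>J0 ?q K. ac k c ^ (?q ^ r0 ?q t))" unfolding wsum_def by (rule power_sum)
    also have "\<dots> = (\<Prod>t\<in>J0 ?q K. Lf k c (r0 ?q t))" by (simp add: ac_frob)
    finally show ?thesis .
  qed
  then show ?thesis unfolding S_pow_ac Gp_def by simp
qed

lemma alg: "(x::real) - 1 \<noteq> 0 \<Longrightarrow> y*z*x^2 - 2*(y*x) + x*y*(k*(z*x) - 2*(z*x - x)/(x-1)) =
   y*((k+1)*(z*x^2) - 2*(z*x^2 - x)/(x-1))"
  by (simp add: field_simps) (simp add: algebra_simps power2_eq_square)

lemma Tt_real:
  assumes q: "q \<ge> (3::nat)"
  shows "real (Tt q K s) = real q ^ s * (real K * real q ^ Suc K - 2 * (real q ^ Suc K - real q) / (real q - 1))"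
proof (induction K arbitrary: s)
  case 0 then show ?case by simp
next
  case (Suc K)
  have ge: "2 * q ^ (s+1) \<le> q ^ (Suc (s + Suc K))"
  proof -
    have "q ^ Suc (s+1) \<le> q ^ (Suc (s + Suc K))" using q by (intro power_increasing) auto
    moreover have "2 * q ^ (s+1) \<le> q ^ Suc (s+1)" using q by simp
    ultimately show ?thesis by linarith
  qed
  have W: "real (Wh q (s+1) (s + Suc K)) = real q ^ (s + K + 2) - 2 * real q ^ (s + 1)"
    unfolding Wh_def using ge by (simp add: of_nat_diff)
  have q1: "real q - 1 \<noteq> 0" using q by simp
  have Tr: "real (Tt q (Suc K) s) = real (Wh q (s+1) (s + Suc K)) + real (Tt q K (s+1))" by simp
  show ?case
    unfolding Tr W Suc.IH[of "s+1"] using alg[OF q1, of "real q ^ s" "real q ^ K" "real K"]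
    by (simp add: power_add power2_eq_square mult_ac add_ac)
qed



lemma ineq:
  fixes x X K :: real
  assumes "3 \<le> x" "x \<le> X" "1 \<le> K"
  shows "(K - 1) * (X - 2) < K * X - 2 * (X - x) / (x - 1)"
proof -
  have "0 \<le> (x - 3) * (X - x)" using assms by (intro mult_nonneg_nonneg) auto
  then have "2 * (X - x) \<le> (X - x) * (x - 1)" by (simp add: algebra_simps)
  then have "2 * (X - x) / (x - 1) \<le> X - x" using assms by (subst pos_divide_le_eq) auto
  then show ?thesis using assms by (simp add: algebra_simps)
qed

lemma degree_S_pow_le: "degree (S_pow k n :: 'a::{field,finite} poly) \<le> k * n"
  unfolding S_pow_ac
  by (rule degree_sum_le) (auto intro: order.trans[OF degree_power_le] simp: degree_ac finite_lists)

theorem theorem5p3: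
  fixes d :: nat and x :: "'a::{field,finite}"
  assumes "CARD('a) > 2" and "d \<ge> 1"
  shows "real (degree (BG (CARD('a) ^ d - 2) :: 'a poly)) =
     (real d - 1) * real CARD('a) ^ d
     - 2 * real CARD('a) * (real CARD('a) ^ (d - 1) - 1) / (real CARD('a) - 1)"
proof -
  let ?q = "CARD('a)"
  have q: "?q \<ge> 3" using assms(1) by simp
  obtain K where dK: "d = Suc K" using assms(2) by (cases d) auto
  define n where "n = ?q ^ Suc K - 2"
  have SP: "(S_pow k n :: 'a poly) = Gp k (J0 ?q K) (r0 ?q)" for k
    unfolding n_def by (rule S_pow_Gp[OF q])
  have van: "(S_pow k n :: 'a poly) = 0" if k: "Suc K \<le> k" for k
  proof -
    have "card (J0 ?q K) = Suc K * (?q - 1) - 1" by simp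
    moreover have "1 \<le> Suc K * (?q - 1)" using q by simp
    moreover have "Suc K * (?q - 1) \<le> k * (?q - 1)" using k by (intro mult_le_mono1)
    ultimately have "card (J0 ?q K) < k * (?q - 1)" by linarith
    then show ?thesis unfolding SP by (rule Gp_vanish[rotated]) simp
  qed
  have BG: "(BG n :: 'a poly) = (\<Sum>k<Suc K. S_pow k n)"
    unfolding BG_def
  proof (rule Sum_any.expand_superset)
    show "finite {..<Suc K}" by simp
    show "{k. (S_pow k n :: 'a poly) \<noteq> 0} \<subseteq> {..<Suc K}" using van by (auto simp: not_less[symmetric])
  qed
  have degK: "degree (S_pow K n :: 'a poly) = Tt ?q K 0"
    unfolding SP using Gp_special[OF special0[OF q] q] by simp
  have Tr: "real (Tt ?q K 0) = real K * real ?q ^ Suc K - 2 * (real ?q ^ Suc K - real ?q) / (real ?q - 1)"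
    using Tt_real[OF q, of K 0] by simp
  have deg: "degree (BG n :: 'a poly) = Tt ?q K 0"
  proof (cases K)
    case 0
    then show ?thesis using BG degK by simp
  next
    case (Suc K')
    have r: "degree (\<Sum>k<K. S_pow k n :: 'a poly) \<le> K' * n"
    proof (rule degree_sum_le)
      fix k assume "k \<in> {..<K}"
      then have "k \<le> K'" using Suc by simp
      then have "k * n \<le> K' * n" by (rule mult_le_mono1)
      then show "degree (S_pow k n :: 'a poly) \<le> K' * n" using degree_S_pow_le order.trans by blast
    qed simp
    have ge: "real ?q \<le> real ?q ^ Suc K" using q by simp
    have n2: "2 \<le> ?q ^ Suc K"
    proof -
      have "?q \<le> ?q ^ Suc K" using q by simp
      then show ?thesis using q by linarith
    qed
    have "real (K' * n) = (real K - 1) * (real ?q ^ Suc K - 2)"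
      unfolding n_def using Suc n2 by (simp add: of_nat_diff)
    also have "\<dots> < real (Tt ?q K 0)" unfolding Tr
      by (rule ineq) (use q ge Suc in auto)
    finally have "K' * n < Tt ?q K 0" by linarith
    then have "degree (\<Sum>k<K. S_pow k n :: 'a poly) < degree (S_pow K n :: 'a poly)" using r degK by linarith
    then have "degree (S_pow K n + (\<Sum>k<K. S_pow k n) :: 'a poly) = degree (S_pow K n :: 'a poly)"
      by (rule degree_add_eq_left)
    moreover have "(\<Sum>k<Suc K. S_pow k n :: 'a poly) = S_pow K n + (\<Sum>k<K. S_pow k n)" by simp
    ultimately show ?thesis unfolding BG using degK by (simp add: add.commute)
  qed
  show ?thesis
    unfolding dK n_def[symmetric] deg Tr
    using q by (simp add: field_simps)
qed

end
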